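(* Let $H$ be an almost-breakable monoid. If $H$ is twisted or bridged, then $\mathcal{P}_{\mathrm{fin},1}(H)$ is not UmF.
   Context: A monoid $H$ is almost-breakable if for all $x,y\in H$, $xy\in\{x,y\}$ or $yx\in\{x,y\}$. An ordered pair $(x,y)\in H\times H$ is balanced if $xy\in\{x,y\}$, unbalanced otherwise. $H$ is twisted if there exist unbalanced pairs $(x,y)$ and $(z,w)$ with $\{x,y\}\cap\{z,w\}=\emptyset$, $xy\in\{z,w\}$ and $zw\in\{x,y\}$. $H$ is bridged if there exist $x_1,x_2,x_3\in H$ such that $(x_1,x_2)$, $(x_2,x_3)$, $(x_1,x_3)$ are unbalanced pairs and $x_1x_3\notin\{x_1x_2,x_2x_3\}$. $\mathcal{P}_{\mathrm{fin},1}(H)$ denotes the set of non-empty finite subsets of $H$ containing $1_H$, a monoid under $XY=\{xy:x\in X,y\in Y\}$. In a monoid $M$: $x\mid_M y$ iff $y\in MxM$; $x,y$ are associated if each divides the other; proper divisor means divides but not associated. A unit-divisor divides $1_M$; otherwise it is a non-unit-divisor. An irreducible is a non-unit-divisor $a$ with $a\neq xy$ for all non-unit-divisors $x,y$ properly dividing $a$. A factorization of $x$ is a finite word over the irreducibles with product $x$. For words $\mathfrak a,\mathfrak b$, $\mathfrak a\sqsubseteq\mathfrak b$ means $\mathfrak a$ is, up to associatedness of letters, a subword (subsequence) of some permutation of $\mathfrak b$; equivalence means $\sqsubseteq$ both ways. A factorization $\mathfrak a$ of $x$ is minimal if no factorization $\mathfrak b$ of $x$ satisfies $\mathfrak b\sqsubseteq\mathfrak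 a\not\sqsubseteq\mathfrak b$. $M$ is UmF if every non-unit-divisor has a factorization and any two minimal factorizations of an element are equivalent. *)

theory Defs
  imports Main "HOL-Library.Multiset" "HOL-Library.Sublist"
begin

definition balanced :: "'a::monoid_mult \<Rightarrow> 'a \<Rightarrow> bool" where
  "balanced x y \<longleftrightarrow> x * y \<in> {x, y}"

definition almost_breakable :: "'a::monoid_mult itself \<Rightarrow> bool" where
  "almost_breakable _ \<longleftrightarrow> (\<forall>x y :: 'a. x * y \<in> {x, y} \<or> y * x \<in> {x, y})"

definition twisted :: "'a::monoid_mult itself \<Rightarrow> bool" where
  "twisted _ \<longleftrightarrow> (\<exists>x y z w :: 'a. \<not> balanced x y \<and> \<not> balanced z w \<and>
      {x, y} \<inter> {z, w} = {} \<and> x * y \<in> {z, w} \<and> z * w \<in> {x, y})"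

definition bridged :: "'a::monoid_mult itself \<Rightarrow> bool" where
  "bridged _ \<longleftrightarrow> (\<exists>x1 x2 x3 :: 'a. \<not> balanced x1 x2 \<and> \<not> balanced x2 x3 \<and>
      \<not> balanced x1 x3 \<and> x1 * x3 \<notin> {x1 * x2, x2 * x3})"

definition Pfin1 :: "'a::monoid_mult set set" where
  "Pfin1 = {X. finite X \<and> X \<noteq> {} \<and> 1 \<in> X}"

definition setmult :: "'a::monoid_mult set \<Rightarrow> 'a set \<Rightarrow> 'a set" where
  "setmult X Y = {x * y | x y. x \<in> X \<and> y \<in> Y}"

definition mdvd :: "'b set \<Rightarrow> ('b \<Rightarrow> 'b \<Rightarrow> 'b) \<Rightarrow> 'b \<Rightarrow> 'b \<Rightarrow> bool" where
  "mdvd M f x y \<longleftrightarrow> (\<exists>a\<in>M. \<exists>b\<in>M. y = f (f a x) b)"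

definition massoc :: "'b set \<Rightarrow> ('b \<Rightarrow> 'b \<Rightarrow> 'b) \<Rightarrow> 'b \<Rightarrow> 'b \<Rightarrow> bool" where
  "massoc M f x y \<longleftrightarrow> mdvd M f x y \<and> mdvd M f y x"

definition mproper_dvd :: "'b set \<Rightarrow> ('b \<Rightarrow> 'b \<Rightarrow> 'b) \<Rightarrow> 'b \<Rightarrow> 'b \<Rightarrow> bool" where
  "mproper_dvd M f x y \<longleftrightarrow> mdvd M f x y \<and> \<not> massoc M f x y"

definition unit_divisor :: "'b set \<Rightarrow> ('b \<Rightarrow> 'b \<Rightarrow> 'b) \<Rightarrow> 'b \<Rightarrow> 'b \<Rightarrow> bool" where
  "unit_divisor M f e x \<longleftrightarrow> mdvd M f x e"

definition mirreducible :: "'b set \<Rightarrow> ('b \<Rightarrow> 'b \<Rightarrow> 'b) \<Rightarrow> 'b \<Rightarrow> 'b \<Rightarrow> bool" where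
  "mirreducible M f e a \<longleftrightarrow> a \<in> M \<and> \<not> unit_divisor M f e a \<and>
     \<not> (\<exists>x\<in>M. \<exists>y\<in>M. \<not> unit_divisor M f e x \<and> \<not> unit_divisor M f e y \<and>
          mproper_dvd M f x a \<and> mproper_dvd M f y a \<and> a = f x y)"

definition word_prod :: "('b \<Rightarrow> 'b \<Rightarrow> 'b) \<Rightarrow> 'b \<Rightarrow> 'b list \<Rightarrow> 'b" where
  "word_prod f e w = foldr f w e"

definition factorization :: "'b set \<Rightarrow> ('b \<Rightarrow> 'b \<Rightarrow> 'b) \<Rightarrow> 'b \<Rightarrow> 'b list \<Rightarrow> 'b \<Rightarrow> bool" where
  "factorization M f e w x \<longleftrightarrow> (\<forall>a\<in>set w. mirreducible M f e a) \<and> word_prod f e w = x"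

definition word_le :: "'b set \<Rightarrow> ('b \<Rightarrow> 'b \<Rightarrow> 'b) \<Rightarrow> 'b list \<Rightarrow> 'b list \<Rightarrow> bool" where
  "word_le M f a b \<longleftrightarrow> (\<exists>p s. mset p = mset b \<and> subseq s p \<and> list_all2 (massoc M f) a s)"

definition word_equiv :: "'b set \<Rightarrow> ('b \<Rightarrow> 'b \<Rightarrow> 'b) \<Rightarrow> 'b list \<Rightarrow> 'b list \<Rightarrow> bool" where
  "word_equiv M f a b \<longleftrightarrow> word_le M f a b \<and> word_le M f b a"

definition minimal_factorization ::
  "'b set \<Rightarrow> ('b \<Rightarrow> 'b \<Rightarrow> 'b) \<Rightarrow> 'b \<Rightarrow> 'b list \<Rightarrow> 'b \<Rightarrow> bool" where
  "minimal_factorization M f e a x \<longleftrightarrow> factorization M f e a x \<and>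
     \<not> (\<exists>b. factorization M f e b x \<and> word_le M f b a \<and> \<not> word_le M f a b)"

definition UmF :: "'b set \<Rightarrow> ('b \<Rightarrow> 'b \<Rightarrow> 'b) \<Rightarrow> 'b \<Rightarrow> bool" where
  "UmF M f e \<longleftrightarrow>
     (\<forall>x\<in>M. \<not> unit_divisor M f e x \<longrightarrow> (\<exists>w. factorization M f e w x)) \<and>
     (\<forall>x\<in>M. \<forall>a b. minimal_factorization M f e a x \<and> minimal_factorization M f e b x
        \<longrightarrow> word_equiv M f a b)"

end

theory Submission
  imports Defs
begin


lemma setmult_insert: "setmult (insert u S) Y = (\<lambda>y. u*y) ` Y \<union> setmult S Y"
  unfolding setmult_def by auto

lemma setmult_empty[simp]: "setmult {} Y = {}"
  unfolding setmult_def by auto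

lemma setmult_one_right[simp]: "setmult X {1} = X"
  unfolding setmult_def by auto

lemma setmult_one_left[simp]: "setmult {1} X = X"
  unfolding setmult_def by auto

lemma one_Pfin1[simp]: "{1} \<in> Pfin1"
  unfolding Pfin1_def by auto

lemma mdvd_subset: "mdvd Pfin1 setmult X Y \<Longrightarrow> X \<subseteq> Y"
proof
  fix x assume "mdvd Pfin1 setmult X Y" "x \<in> X"
  then obtain A B where AB: "A \<in> Pfin1" "B \<in> Pfin1" "Y = setmult (setmult A X) B"
    unfolding mdvd_def by blast
  have "1 * x \<in> setmult A X" using AB(1) \<open>x \<in> X\<close> unfolding setmult_def Pfin1_def by blast
  then have "1 * x * 1 \<in> Y" using AB unfolding setmult_def Pfin1_def by blast
  then show "x \<in> Y" by simp
qed

lemma massoc_eq: "massoc Pfin1 setmult X Y \<Longrightarrow> X = Y"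
  unfolding massoc_def using mdvd_subset by blast

lemma massoc_refl: "massoc Pfin1 setmult X X"
  unfolding massoc_def mdvd_def by (metis one_Pfin1 setmult_one_left setmult_one_right)

lemma unit_divisor_iff: "unit_divisor Pfin1 setmult {1} X \<Longrightarrow> X \<subseteq> {1}"
  unfolding unit_divisor_def using mdvd_subset by blast

lemma pair_Pfin1: "{1, u} \<in> Pfin1"
  unfolding Pfin1_def by auto

lemma pair_irr:
  assumes "u \<noteq> (1::'a::monoid_mult)"
  shows "mirreducible Pfin1 setmult {1} {1,u}"
proof -
  have nu: "\<not> unit_divisor Pfin1 setmult {1} {1,u}" using unit_divisor_iff assms by blast
  have "False" if "x \<in> Pfin1" "\<not> unit_divisor Pfin1 setmult {1} x" "mproper_dvd Pfin1 setmult x {1,u}" for x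
  proof -
    have "x \<subseteq> {1,u}" using that(3) mdvd_subset unfolding mproper_dvd_def by blast
    moreover have "1 \<in> x" using that(1) unfolding Pfin1_def by blast
    moreover have "x \<noteq> {1}" using that(2) unfolding unit_divisor_def mdvd_def
      by (metis one_Pfin1 setmult_one_left setmult_one_right)
    ultimately have "x = {1,u}" by blast
    then show False using that(3) massoc_refl unfolding mproper_dvd_def by blast
  qed
  then show ?thesis unfolding mirreducible_def using nu pair_Pfin1 by blast
qed

lemma subseq_mset: "subseq s p \<Longrightarrow> mset s \<subseteq># mset p"
  by (induction rule: list_emb.induct) (auto intro: subset_mset.order_trans)

lemma list_all2_massoc: "list_all2 (massoc Pfin1 setmult) a s \<Longrightarrow> a = s"
  by (induction rule: list_all2_induct) (auto dest: massoc_eq)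

lemma word_le_mset: "word_le Pfin1 setmult a b \<Longrightarrow> mset a \<subseteq># mset b"
  unfolding word_le_def by (metis list_all2_massoc subseq_mset)

lemma word_le_of_mset: "mset a = mset b \<Longrightarrow> word_le Pfin1 setmult a b"
  unfolding word_le_def
  by (rule exI[of _ a], rule exI[of _ a]) (simp add: list_all2_refl massoc_refl)

lemma minimal_crit:
  assumes "factorization Pfin1 setmult {1} w X"
    and "\<And>s. mset s \<subset># mset w \<Longrightarrow> word_prod setmult {1} s \<noteq> X"
  shows "minimal_factorization Pfin1 setmult {1} w X"
  unfolding minimal_factorization_def
proof (intro conjI assms(1) notI)
  assume "\<exists>b. factorization Pfin1 setmult {1} b X \<and> word_le Pfin1 setmult b w \<and> \<not> word_le Pfin1 setmult w b"
  then obtain b where b: "factorization Pfin1 setmult {1} b X" "word_le Pfin1 setmult b w" "\<not> word_le Pfin1 setmult w b"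
    by blast
  have "mset b \<subseteq># mset w" using b(2) word_le_mset by blast
  moreover have "mset b \<noteq> mset w" using b(3) word_le_of_mset by metis
  ultimately have "mset b \<subset># mset w" by (simp add: subset_mset.le_neq_trans)
  then have "word_prod setmult {1} b \<noteq> X" using assms(2) by blast
  then show False using b(1) unfolding factorization_def by blast
qed

lemma card_setmult: "finite A \<Longrightarrow> finite B \<Longrightarrow> finite (setmult A B) \<and> card (setmult A B) \<le> card A * card B"
proof -
  assume f: "finite A" "finite B"
  have e: "setmult A B = (\<lambda>(x,y). x*y) ` (A \<times> B)" unfolding setmult_def by auto
  show ?thesis unfolding e using f
    by (metis card_cartesian_product card_image_le finite_SigmaI finite_imageI)
qed

lemma card_word_prod:
  assumes "\<forall>A\<in>set s. finite A \<and> card A \<le> 2"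
  shows "finite (word_prod setmult {1} s) \<and> card (word_prod setmult {1} s) \<le> 2 ^ length s"
  using assms
proof (induction s)
  case Nil
  then show ?case by (simp add: word_prod_def)
next
  case (Cons A s)
  have "word_prod setmult {1} (A # s) = setmult A (word_prod setmult {1} s)"
    by (simp add: word_prod_def)
  moreover have "card A * card (word_prod setmult {1} s) \<le> 2 * 2 ^ length s"
    using Cons by (simp add: mult_le_mono)
  moreover have "finite A" "card A \<le> 2" using Cons.prems by auto
  moreover have "finite (word_prod setmult {1} s)" using Cons by auto
  ultimately show ?case using card_setmult[of A "word_prod setmult {1} s"] by auto
qed

lemma word_equiv_mset: "word_equiv Pfin1 setmult a b \<Longrightarrow> mset a = mset b"
  unfolding word_equiv_def using word_le_mset subset_mset.antisym by blast

lemma not_UmF_crit: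
  fixes X :: "'a::monoid_mult set"
  assumes "X \<in> Pfin1" "minimal_factorization Pfin1 setmult {1} a X"
    "minimal_factorization Pfin1 setmult {1} b X" "mset a \<noteq> mset b"
  shows "\<not> UmF (Pfin1 :: 'a::monoid_mult set set) setmult {1}"
proof
  assume "UmF (Pfin1 :: 'a::monoid_mult set set) setmult {1}"
  then have "word_equiv Pfin1 setmult a b" using assms(1-3) unfolding UmF_def by blast
  then show False using word_equiv_mset assms(4) by blast
qed

lemma small_sub:
  assumes "\<forall>A\<in>set w. finite A \<and> card A \<le> 2" "mset s \<subset># mset w"
    "2 ^ (length w - 1) < card X"
  shows "word_prod setmult {1} s \<noteq> X"
proof
  assume eq: "word_prod setmult {1} s = X"
  have "set s \<subseteq> set w" using assms(2)
    by (metis mset_subset_eqD set_mset_mset subsetI subset_mset.less_imp_le)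
  then have "\<forall>A\<in>set s. finite A \<and> card A \<le> 2" using assms(1) by blast
  then have c: "card X \<le> 2 ^ length s" using card_word_prod eq by metis
  have "length s < length w" using assms(2) by (metis mset_subset_size size_mset)
  then have "(2::nat) ^ length s \<le> 2 ^ (length w - 1)" by (intro power_increasing) auto
  then show False using c assms(3) by linarith
qed



lemma ab_idem: "almost_breakable TYPE('a::monoid_mult) \<Longrightarrow> (x::'a) * x = x"
  unfolding almost_breakable_def by auto

lemma ab_swap: "almost_breakable TYPE('a::monoid_mult) \<Longrightarrow> \<not> balanced (x::'a) y \<Longrightarrow> y * x = x \<or> y * x = y"
  unfolding almost_breakable_def balanced_def by blast

lemma unbal_ne: "almost_breakable TYPE('a::monoid_mult) \<Longrightarrow> \<not> balanced (x::'a) y \<Longrightarrow> x \<noteq> 1 \<and> y \<noteq> 1 \<and> x \<noteq> y"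
  unfolding balanced_def using ab_idem by fastforce

lemma word_prod3: "word_prod setmult {1} [A,B,C] = setmult A (setmult B C)"
  by (simp add: word_prod_def)

lemma word_prod4: "word_prod setmult {1} [A,B,C,D] = setmult A (setmult B (setmult C D))"
  by (simp add: word_prod_def)

lemma pair_mult: "setmult {1, u} Y = Y \<union> (\<lambda>y. u*y) ` Y"
  by (simp add: setmult_insert Un_commute)

lemma card_pair: "finite {1,u} \<and> card {1,u} \<le> 2"
  by (simp add: card_insert_if)

lemma three_pairs:
  assumes "X \<in> Pfin1" "word_prod setmult {1} [{1,u1},{1,u2},{1,u3}] = (X :: 'a::monoid_mult set)"
    "u1 \<noteq> 1" "u2 \<noteq> 1" "u3 \<noteq> 1" "4 < card X"
  shows "minimal_factorization Pfin1 setmult {1} [{1,u1},{1,u2},{1,u3}] X"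
proof (rule minimal_crit)
  show "factorization Pfin1 setmult {1} [{1, u1}, {1, u2}, {1, u3}] X"
    unfolding factorization_def using assms pair_irr by auto
  fix s assume s: "mset s \<subset># mset [{1, u1}, {1, u2}, {1, u3}]"
  have "\<forall>A\<in>set [{1,u1},{1,u2},{1,u3}]. finite A \<and> card A \<le> 2" using card_pair by auto
  moreover have "2 ^ (length [{1,u1},{1,u2},{1,u3}] - 1) < card X" using assms(6) by simp
  ultimately show "word_prod setmult {1} s \<noteq> X" using small_sub s by blast
qed

lemma twisted_case:
  fixes x y z w :: "'a::monoid_mult"
  assumes ab: "almost_breakable TYPE('a)"
    and u1: "\<not> balanced x y" and u2: "\<not> balanced z w"
    and d: "{x, y} \<inter> {z, w} = {}" and h1: "x * y \<in> {z, w}" and h2: "z * w \<in> {x, y}"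
  shows "\<not> UmF (Pfin1 :: 'a set set) setmult {1}"
proof -
  have idem: "\<And>t::'a. t * t = t" using ab_idem[OF ab] .
  have n1: "x \<noteq> 1" "y \<noteq> 1" "x \<noteq> y" using unbal_ne[OF ab u1] by auto
  have n2: "z \<noteq> 1" "w \<noteq> 1" "z \<noteq> w" using unbal_ne[OF ab u2] by auto
  have d2: "x \<noteq> z" "x \<noteq> w" "y \<noteq> z" "y \<noteq> w" using d by auto
  have nb1: "x * y \<noteq> x" "x * y \<noteq> y" using u1 unfolding balanced_def by auto
  have nb2: "z * w \<noteq> z" "z * w \<noteq> w" using u2 unfolding balanced_def by auto
  have wz: "w * z = z \<or> w * z = w" using ab_swap[OF ab u2] .
  have c5: "card {1,x,y,z,w} = 5" using n1 n2 d2 by simp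
  show ?thesis
  proof (cases "x * y = z")
    case xyz: True
    show ?thesis
    proof (cases "z * w = x")
      case zwx: True
      define X where "X = {1,x,y,z,w,y*w}"
      have "x * (y * w) = (x * y) * w" by (simp add: mult.assoc)
      then have f1: "x * (y * w) = x" using xyz zwx by simp
      have "(z * w) * w = z * w" by (simp add: mult.assoc idem)
      then have f2: "x * w = x" using zwx by simp
      have "(x * y) * y = x * y" by (simp add: mult.assoc idem)
      then have f3: "z * y = z" using xyz by simp
      have "z * (y * w) = (z * y) * w" by (simp add: mult.assoc)
      then have f4: "z * (y * w) = x" using f3 zwx by simp
      have e1: "word_prod setmult {1} [{1,x},{1,y},{1,w}] = X"
        unfolding word_prod3 pair_mult X_def using xyz f1 f2 by auto
      have e2: "word_prod setmult {1} [{1,z},{1,y},{1,w}] = X"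
        unfolding word_prod3 pair_mult X_def using f3 f4 zwx by auto
      have XP: "X \<in> Pfin1" unfolding X_def Pfin1_def by auto
      have "card {1,x,y,z,w} \<le> card X" by (rule card_mono) (auto simp: X_def)
      then have cX: "4 < card X" using c5 by simp
      show ?thesis
      proof (rule not_UmF_crit[OF XP])
        show "minimal_factorization Pfin1 setmult {1} [{1,x},{1,y},{1,w}] X"
          by (rule three_pairs) (use XP e1 n1 n2 cX in auto)
        show "minimal_factorization Pfin1 setmult {1} [{1,z},{1,y},{1,w}] X"
          by (rule three_pairs) (use XP e2 n1 n2 cX in auto)
        show "mset [{1,x},{1,y},{1,w}] \<noteq> mset [{1,z},{1,y},{1,w}]"
        proof
          assume eq: "mset [{1,x},{1,y},{1,w}] = mset [{1,z},{1,y},{1,w}]"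
          have "{1,x} \<in># mset [{1,x},{1,y},{1,w}]" by simp
          then have "{1,x} \<in># mset [{1,z},{1,y},{1,w}]" by (simp only: eq)
          then have "{1,x} \<in> {{1,z},{1,y},{1,w}}" by simp
          then show False using n1 n2 d2 by (auto simp: doubleton_eq_iff)
        qed
      qed
    next
      case False
      then have zwy: "z * w = y" using h2 by auto
      have zz: "z = x * (z * w)" using xyz zwy by simp
      have "x * (z * w) * w = x * (z * w)" by (simp add: mult.assoc idem)
      then have "z * w = z" unfolding zz[symmetric] .
      then show ?thesis using nb2 by blast
    qed
  next
    case False
    then have xyw: "x * y = w" using h1 by auto
    show ?thesis
    proof (cases "z * w = y")
      case zwy: True
      define X where "X = {1,x,y,z,w,x*z}"
      have "x * (x * y) = x * y" by (simp add: mult.assoc[symmetric] idem)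
      then have f1: "x * w = w" using xyw by simp
      have f2: "x * (z * w) = w" using xyw zwy by simp
      have "y * z = z * (w * z)" by (simp add: zwy[symmetric] mult.assoc)
      then have f3: "y * z = y \<or> y * z = z" using wz idem zwy by auto
      have "x * (y * z) = (x * y) * z" by (simp add: mult.assoc)
      then have f4: "x * (y * z) = w * z" using xyw by simp
      have e1: "word_prod setmult {1} [{1,x},{1,z},{1,w}] = X"
        unfolding word_prod3 pair_mult X_def using zwy f1 f2 by auto
      have e2: "word_prod setmult {1} [{1,x},{1,y},{1,z}] = X"
        unfolding word_prod3 pair_mult X_def using xyw f3 f4 wz by auto
      have XP: "X \<in> Pfin1" unfolding X_def Pfin1_def by auto
      have "card {1,x,y,z,w} \<le> card X" by (rule card_mono) (auto simp: X_def)
      then have cX: "4 < card X" using c5 by simp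
      show ?thesis
      proof (rule not_UmF_crit[OF XP])
        show "minimal_factorization Pfin1 setmult {1} [{1,x},{1,z},{1,w}] X"
          by (rule three_pairs) (use XP e1 n1 n2 cX in auto)
        show "minimal_factorization Pfin1 setmult {1} [{1,x},{1,y},{1,z}] X"
          by (rule three_pairs) (use XP e2 n1 n2 cX in auto)
        show "mset [{1,x},{1,z},{1,w}] \<noteq> mset [{1,x},{1,y},{1,z}]"
        proof
          assume eq: "mset [{1,x},{1,z},{1,w}] = mset [{1,x},{1,y},{1,z}]"
          have "{1,w} \<in># mset [{1,x},{1,z},{1,w}]" by simp
          then have "{1,w} \<in># mset [{1,x},{1,y},{1,z}]" by (simp only: eq)
          then have "{1,w} \<in> {{1,x},{1,y},{1,z}}" by simp
          then show False using n1 n2 d2 by (auto simp: doubleton_eq_iff)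
        qed
      qed
    next
      case False
      then have zwx: "z * w = x" using h2 by auto
      have xx: "x = z * (x * y)" using xyw zwx by simp
      have "z * (x * y) * y = z * (x * y)" by (simp add: mult.assoc idem)
      then have "x * y = x" unfolding xx[symmetric] .
      then show ?thesis using nb1 by blast
    qed
  qed
qed



lemma neq_by_witness: "(\<exists>e\<in>E. (e \<in> P) \<noteq> (e \<in> Q)) \<Longrightarrow> P \<noteq> Q"
  by blast

lemma case_rule:
  fixes x y :: "'a::monoid_mult"
  assumes "y * x = x \<or> y * x = y"
  shows "(y*x = x \<and> (\<forall>z. y*(x*z) = x*z)) \<or> (y*x = y \<and> (\<forall>z. y*(x*z) = y*z))"
  using assms by (metis mult.assoc)

lemma bridged_calc:
  fixes a b c :: "'a::monoid_mult"
  assumes I1: "\<And>t::'a. t*t = t" and I2: "\<And>t z::'a. t*(t*z) = t*z"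
    and BA: "(b*a = a \<and> (\<forall>z. b*(a*z) = a*z)) \<or> (b*a = b \<and> (\<forall>z. b*(a*z) = b*z))"
    and CB: "(c*b = b \<and> (\<forall>z. c*(b*z) = b*z)) \<or> (c*b = c \<and> (\<forall>z. c*(b*z) = c*z))"
    and CA: "(c*a = a \<and> (\<forall>z. c*(a*z) = a*z)) \<or> (c*a = c \<and> (\<forall>z. c*(a*z) = c*z))"
    and D: "a \<noteq> 1" "b \<noteq> 1" "c \<noteq> 1" "a \<noteq> b" "a \<noteq> c" "b \<noteq> c"
      "a*b \<noteq> 1" "a*b \<noteq> a" "a*b \<noteq> b" "a*b \<noteq> c"
      "b*c \<noteq> 1" "b*c \<noteq> a" "b*c \<noteq> b" "b*c \<noteq> c" "a*b \<noteq> b*c"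
      "a*c \<noteq> 1" "a*c \<noteq> a" "a*c \<noteq> b" "a*c \<noteq> c" "a*c \<noteq> a*b" "a*c \<noteq> b*c"
      "a*(b*c) \<noteq> 1" "a*(b*c) \<noteq> a" "a*(b*c) \<noteq> b" "a*(b*c) \<noteq> c"
  shows "(\<forall>u1\<in>{a,b,c,b*c}. \<forall>u2\<in>{a,b,c,b*c}. \<forall>u3\<in>{a,b,c,b*c}.
      \<exists>e\<in>{a,b,c,a*b,b*c,a*c}. (e \<in> setmult {1,u1} (setmult {1,u2} {1,u3})) \<noteq> (e \<in> {1,a,b,c,a*b,b*c}))
    \<and> setmult {1,b} (setmult {1,c} (setmult {1,a} {1,b})) = {1,a,b,c,a*b,b*c}
    \<and> setmult {1,c} (setmult {1,b*c} (setmult {1,a} {1,b})) = {1,a,b,c,a*b,b*c}"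
  using BA CB CA
  apply (elim disjE conjE)
  apply (simp_all add: pair_mult mult.assoc I1 I2 D D[symmetric])
  apply (auto simp: I1)
  done

lemma four_min:
  fixes X :: "'a::monoid_mult set"
  assumes XP: "X \<in> Pfin1" and e: "word_prod setmult {1} w = X" and len: "length w = 4"
    and L: "\<forall>A\<in>set w. \<exists>u\<in>U. A = {1,u}" and U1: "1 \<notin> U" and cX: "4 < card X"
    and T: "\<forall>u1\<in>U. \<forall>u2\<in>U. \<forall>u3\<in>U. setmult {1,u1} (setmult {1,u2} {1,u3}) \<noteq> X"
  shows "minimal_factorization Pfin1 setmult {1} w X"
proof (rule minimal_crit)
  have "\<forall>A\<in>set w. mirreducible Pfin1 setmult {1} A"
  proof
    fix A assume "A \<in> set w"
    then obtain u where "u \<in> U" "A = {1,u}" using L by blast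
    then show "mirreducible Pfin1 setmult {1} A" using pair_irr U1 by metis
  qed
  then show "factorization Pfin1 setmult {1} w X"
    unfolding factorization_def using e by blast
  fix s assume s: "mset s \<subset># mset w"
  have ls: "length s < 4" using s len by (metis mset_subset_size size_mset)
  have ss: "set s \<subseteq> set w" using s
    by (metis mset_subset_eqD set_mset_mset subsetI subset_mset.less_imp_le)
  show "word_prod setmult {1} s \<noteq> X"
  proof (cases "length s \<le> 2")
    case True
    have "\<forall>A\<in>set s. finite A \<and> card A \<le> 2"
    proof
      fix A assume "A \<in> set s"
      then have "A \<in> set w" using ss by blast
      then obtain u where "A = {1,u}" using L by blast
      then show "finite A \<and> card A \<le> 2" using card_pair by simp
    qed
    then have c: "card (word_prod setmult {1} s) \<le> 2 ^ length s" using card_word_prod by blast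
    have "(2::nat) ^ length s \<le> 2 ^ 2" using True by (intro power_increasing) auto
    then show ?thesis using c cX by auto
  next
    case False
    then have "length s = 3" using ls by auto
    then obtain A1 A2 A3 where sA: "s = [A1,A2,A3]"
      by (auto simp: length_Suc_conv numeral_3_eq_3)
    then have "A1 \<in> set w" "A2 \<in> set w" "A3 \<in> set w" using ss by auto
    then obtain u1 u2 u3 where "u1 \<in> U" "u2 \<in> U" "u3 \<in> U" "A1 = {1,u1}" "A2 = {1,u2}" "A3 = {1,u3}"
      using L by meson
    moreover have "word_prod setmult {1} s = setmult A1 (setmult A2 A3)"
      using sA by (simp add: word_prod_def)
    ultimately show ?thesis using T by auto
  qed
qed

lemma bridged_case:
  fixes a b c :: "'a::monoid_mult"
  assumes ab: "almost_breakable TYPE('a)"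
    and u1: "\<not> balanced a b" and u2: "\<not> balanced b c" and u3: "\<not> balanced a c"
    and h: "a * c \<notin> {a * b, b * c}"
  shows "\<not> UmF (Pfin1 :: 'a set set) setmult {1}"
proof -
  have I1: "\<And>t::'a. t*t = t" using ab_idem[OF ab] .
  have I2: "\<And>t z::'a. t*(t*z) = t*z" by (simp add: mult.assoc[symmetric] I1)
  have n1: "a \<noteq> 1" "b \<noteq> 1" "a \<noteq> b" using unbal_ne[OF ab u1] by auto
  have n2: "c \<noteq> 1" "b \<noteq> c" using unbal_ne[OF ab u2] by auto
  have n3: "a \<noteq> c" using unbal_ne[OF ab u3] by auto
  have nb: "a*b \<noteq> a" "a*b \<noteq> b" "b*c \<noteq> b" "b*c \<noteq> c" "a*c \<noteq> a" "a*c \<noteq> c"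
    using u1 u2 u3 unfolding balanced_def by auto
  have hh: "a*c \<noteq> a*b" "a*c \<noteq> b*c" using h by auto
  have sw1: "b*a = a \<or> b*a = b" using ab_swap[OF ab u1] .
  have sw2: "c*b = b \<or> c*b = c" using ab_swap[OF ab u2] .
  have sw3: "c*a = a \<or> c*a = c" using ab_swap[OF ab u3] .
  have one: "x = 1" if "x*y = 1" for x y :: 'a
  proof -
    have "x = x * (x * y)" using that by simp
    also have "\<dots> = x * y" by (rule I2)
    also have "\<dots> = 1" by (rule that)
    finally show ?thesis .
  qed
  have ab1: "a*b \<noteq> 1" "b*c \<noteq> 1" "a*c \<noteq> 1" "a*(b*c) \<noteq> 1" using one n1 n2 by blast+
  have d1: "a*b \<noteq> c"
  proof
    assume q: "a*b = c"
    have "a*c = a*(a*b)" using q by simp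
    also have "\<dots> = a*b" by (rule I2)
    also have "\<dots> = c" by (rule q)
    finally show False using nb by simp
  qed
  have d2: "b*c \<noteq> a"
  proof
    assume q: "b*c = a"
    have "a*c = (b*c)*c" using q by simp
    also have "\<dots> = b*(c*c)" by (rule mult.assoc)
    also have "\<dots> = b*c" using I1 by simp
    also have "\<dots> = a" by (rule q)
    finally show False using nb by simp
  qed
  have d3: "a*c \<noteq> b"
  proof
    assume q: "a*c = b"
    have "a*b = a*(a*c)" using q by simp
    also have "\<dots> = a*c" by (rule I2)
    also have "\<dots> = b" by (rule q)
    finally show False using nb by simp
  qed
  have d4: "a*b \<noteq> b*c"
  proof
    assume eq: "a*b = b*c"
    have e1: "(b*a)*b = b*c" using eq I2 by (simp add: mult.assoc)
    have e2: "(a*b)*b = (b*c)*b" using eq by simp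
    have e3: "c*(a*b) = (c*b)*c" using eq by (simp add: mult.assoc)
    have e4: "(a*b)*a = b*(c*a)" using eq by (simp add: mult.assoc)
    show False
    proof (cases "b*a = b")
      case True
      then show False using e1 I1 nb by simp
    next
      case False
      then have ba: "b*a = a" using sw1 by auto
      show False
      proof (cases "c*b = b")
        case True
        then have "a*b = b" using e2 I1 by (simp add: mult.assoc)
        then show False using nb by simp
      next
        case False
        then have cb: "c*b = c" using sw2 by auto
        show False
        proof (cases "c*a = a")
          case True
          then have "a*b = c" using e3 cb I1 by (simp add: mult.assoc[symmetric])
          then show False using d1 by simp
        next
          case False
          then have ca: "c*a = c" using sw3 by auto
          have "a = b*c" using e4 ba ca I1 by (simp add: mult.assoc)
          then show False using d2 by simp
        qed
      qed
    qed
  qed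
  have t1: "a*(b*c) \<noteq> a"
  proof
    assume q: "a*(b*c) = a"
    have "a*c = (a*(b*c))*c" using q by simp
    also have "\<dots> = a*(b*(c*c))" by (simp only: mult.assoc)
    also have "\<dots> = a*(b*c)" using I1 by simp
    also have "\<dots> = a" by (rule q)
    finally show False using nb by simp
  qed
  have t2: "a*(b*c) \<noteq> b"
  proof
    assume q: "a*(b*c) = b"
    have "a*b = a*(a*(b*c))" using q by simp
    also have "\<dots> = a*(b*c)" by (rule I2)
    also have "\<dots> = b" by (rule q)
    finally show False using nb by simp
  qed
  have t3: "a*(b*c) \<noteq> c"
  proof
    assume q: "a*(b*c) = c"
    have "a*c = a*(a*(b*c))" using q by simp
    also have "\<dots> = a*(b*c)" by (rule I2)
    also have "\<dots> = c" by (rule q)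
    finally show False using nb by simp
  qed
  note calc = bridged_calc[OF I1 I2 case_rule[OF sw1] case_rule[OF sw2] case_rule[OF sw3]
      n1(1) n1(2) n2(1) n1(3) n3 n2(2) ab1(1) nb(1) nb(2) d1 ab1(2) d2 nb(3) nb(4) d4
      ab1(3) nb(5) d3 nb(6) hh(1) hh(2) ab1(4) t1 t2 t3]
  define X where "X = {1,a,b,c,a*b,b*c}"
  have XP: "X \<in> Pfin1" unfolding X_def Pfin1_def by auto
  note DD = n1 n2 n3 nb d1 d2 d4 ab1
  have cX: "card X = 6" unfolding X_def
    using DD DD[symmetric] by simp
  define U where "U = {a,b,c,b*c}"
  have U1: "1 \<notin> U" unfolding U_def using n1 n2 ab1 by auto
  have T: "\<forall>u1\<in>U. \<forall>u2\<in>U. \<forall>u3\<in>U. setmult {1,u1} (setmult {1,u2} {1,u3}) \<noteq> X"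
  proof (intro ballI)
    fix u1 u2 u3 assume h: "u1 \<in> U" "u2 \<in> U" "u3 \<in> U"
    have "\<exists>e\<in>{a,b,c,a*b,b*c,a*c}. (e \<in> setmult {1,u1} (setmult {1,u2} {1,u3})) \<noteq> (e \<in> X)"
      using conjunct1[OF calc] h unfolding U_def X_def by blast
    then show "setmult {1,u1} (setmult {1,u2} {1,u3}) \<noteq> X" by (rule neq_by_witness)
  qed
  have m1: "minimal_factorization Pfin1 setmult {1} [{1,b},{1,c},{1,a},{1,b}] X"
  proof (rule four_min[OF XP _ _ _ U1 _ T])
    show "word_prod setmult {1} [{1,b},{1,c},{1,a},{1,b}] = X"
      using calc unfolding word_prod4 X_def by simp
  qed (use cX in \<open>auto simp: U_def\<close>)
  have m2: "minimal_factorization Pfin1 setmult {1} [{1,c},{1,b*c},{1,a},{1,b}] X"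
  proof (rule four_min[OF XP _ _ _ U1 _ T])
    show "word_prod setmult {1} [{1,c},{1,b*c},{1,a},{1,b}] = X"
      using calc unfolding word_prod4 X_def by simp
  qed (use cX in \<open>auto simp: U_def\<close>)
  have ms: "mset [{1,b},{1,c},{1,a},{1,b}] \<noteq> mset [{1,c},{1,b*c},{1,a},{1,b}]"
  proof
    assume eq: "mset [{1,b},{1,c},{1,a},{1,b}] = mset [{1,c},{1,b*c},{1,a},{1,b}]"
    have "{1,b*c} \<in># mset [{1,c},{1,b*c},{1,a},{1,b}]" by simp
    then have "{1,b*c} \<in># mset [{1,b},{1,c},{1,a},{1,b}]" by (simp only: eq)
    then have "{1,b*c} \<in> {{1,b},{1,c},{1,a},{1,b}}" by simp
    then show False using nb d2 ab1 by (auto simp: doubleton_eq_iff)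
  qed
  show ?thesis using not_UmF_crit[OF XP m1 m2 ms] .
qed


theorem proposition4p5:
  assumes "almost_breakable TYPE('a::monoid_mult)"
    and "twisted TYPE('a) \<or> bridged TYPE('a)"
  shows "\<not> UmF (Pfin1 :: 'a set set) setmult {1}"
  using assms(2)
proof
  assume "twisted TYPE('a)"
  then obtain x y z w :: 'a where "\<not> balanced x y" "\<not> balanced z w"
      "{x, y} \<inter> {z, w} = {}" "x * y \<in> {z, w}" "z * w \<in> {x, y}"
    unfolding twisted_def by blast
  then show ?thesis using twisted_case[OF assms(1)] by blast
next
  assume "bridged TYPE('a)"
  then obtain x1 x2 x3 :: 'a where "\<not> balanced x1 x2" "\<not> balanced x2 x3"
      "\<not> balanced x1 x3" "x1 * x3 \<notin> {x1 * x2, x2 * x3}"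
    unfolding bridged_def by blast
  then show ?thesis using bridged_case[OF assms(1)] by blast
qed

end
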